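(* Let $D,k\ge 1$ and $b\ge 0$ be integers. Every rooted tree $T$ of maximum degree at most $D$, with $b(T)\le b$, and with more than $f(D,b,k)$ leaves contains a comb with $k$ teeth, all of which are leaves of $T$.
   Context: For a rooted tree $T$, $b(T)$ denotes the maximum depth of a rooted complete binary tree which appears in $T$ as a rooted minor (the depth of a rooted tree is the maximum number of edges of a root-leaf path). The function $f:\mathbb{N}^3\to\mathbb{N}$ is defined recursively by $f(D,b,k)=1$ if $k=1$ or $b=0$, and $f(D,b,k)=f(D,b,k-1)+(D-1)\cdot f(D,b-1,k-1)$ if $k\ge 2$ and $b\ge 1$. A comb with teeth $v_1,\ldots,v_k$ is a tree consisting of a path $P$ (the spine) and vertex-disjoint paths $P_1,\ldots,P_k$ of length at least one such that $P_i$ joins $v_i$ to a vertex of $P$. *)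

theory Defs
  imports Main
begin

definition is_path :: "('a \<Rightarrow> 'a \<Rightarrow> bool) \<Rightarrow> 'a set \<Rightarrow> 'a list \<Rightarrow> bool" where
  "is_path E V ps \<longleftrightarrow> ps \<noteq> [] \<and> distinct ps \<and> set ps \<subseteq> V \<and>
     (\<forall>i. Suc i < length ps \<longrightarrow> E (ps ! i) (ps ! Suc i))"

definition is_tree :: "'a set \<Rightarrow> ('a \<Rightarrow> 'a \<Rightarrow> bool) \<Rightarrow> bool" where
  "is_tree V E \<longleftrightarrow> finite V \<and> V \<noteq> {} \<and>
     (\<forall>x y. E x y \<longrightarrow> x \<in> V \<and> y \<in> V \<and> E y x \<and> x \<noteq> y) \<and>
     (\<forall>x\<in>V. \<forall>y\<in>V. \<exists>!ps. is_path E V ps \<and> hd ps = x \<and> last ps = y)"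

definition rooted_tree :: "'a set \<Rightarrow> ('a \<Rightarrow> 'a \<Rightarrow> bool) \<Rightarrow> 'a \<Rightarrow> bool" where
  "rooted_tree V E r \<longleftrightarrow> is_tree V E \<and> r \<in> V"

definition degree :: "'a set \<Rightarrow> ('a \<Rightarrow> 'a \<Rightarrow> bool) \<Rightarrow> 'a \<Rightarrow> nat" where
  "degree V E v = card {w \<in> V. E v w}"

text \<open>Leaves of a rooted tree: non-root vertices without children, i.e. non-root vertices of degree 1.\<close>
definition leaves :: "'a set \<Rightarrow> ('a \<Rightarrow> 'a \<Rightarrow> bool) \<Rightarrow> 'a \<Rightarrow> 'a set" where
  "leaves V E r = {v \<in> V. v \<noteq> r \<and> degree V E v = 1}"

definition connected_set :: "('a \<Rightarrow> 'a \<Rightarrow> bool) \<Rightarrow> 'a set \<Rightarrow> bool" where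
  "connected_set E S \<longleftrightarrow> (\<forall>x\<in>S. \<forall>y\<in>S. \<exists>ps. is_path E S ps \<and> hd ps = x \<and> last ps = y)"

text \<open>The complete binary tree of depth d has as vertices the bool lists of length \<le> d,
  root [], and children xs @ [c].\<close>
definition cbt_rooted_minor :: "'a set \<Rightarrow> ('a \<Rightarrow> 'a \<Rightarrow> bool) \<Rightarrow> 'a \<Rightarrow> nat \<Rightarrow> bool" where
  "cbt_rooted_minor V E r d \<longleftrightarrow>
    (\<exists>X :: bool list \<Rightarrow> 'a set.
       (\<forall>xs. length xs \<le> d \<longrightarrow> X xs \<noteq> {} \<and> X xs \<subseteq> V \<and> connected_set E (X xs)) \<and>
       (\<forall>xs ys. length xs \<le> d \<longrightarrow> length ys \<le> d \<longrightarrow> xs \<noteq> ys \<longrightarrow> X xs \<inter> X ys = {}) \<and>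
       r \<in> X [] \<and>
       (\<forall>xs c. length xs < d \<longrightarrow> (\<exists>u\<in>X xs. \<exists>w\<in>X (xs @ [c]). E u w)))"

definition bT :: "'a set \<Rightarrow> ('a \<Rightarrow> 'a \<Rightarrow> bool) \<Rightarrow> 'a \<Rightarrow> nat" where
  "bT V E r = (GREATEST d. cbt_rooted_minor V E r d)"

fun f :: "nat \<Rightarrow> nat \<Rightarrow> nat \<Rightarrow> nat" where
  "f D b 0 = 1"
| "f D b (Suc 0) = 1"
| "f D 0 (Suc (Suc k)) = 1"
| "f D (Suc b) (Suc (Suc k)) = f D (Suc b) (Suc k) + (D - 1) * f D b (Suc k)"

definition has_comb_with_teeth_in :: "'a set \<Rightarrow> ('a \<Rightarrow> 'a \<Rightarrow> bool) \<Rightarrow> nat \<Rightarrow> 'a set \<Rightarrow> bool" where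
  "has_comb_with_teeth_in V E k L \<longleftrightarrow>
    (\<exists>P Q. is_path E V P \<and>
       (\<forall>i<k. is_path E V (Q i) \<and> length (Q i) \<ge> 2 \<and>
              set (Q i) \<inter> set P = {last (Q i)} \<and> hd (Q i) \<in> L) \<and>
       (\<forall>i<k. \<forall>j<k. i \<noteq> j \<longrightarrow> set (Q i) \<inter> set (Q j) = {}))"

end

theory Submission
  imports Defs
begin

lemma path_single: "v \<in> S \<Longrightarrow> is_path E S [v]"
  by (simp add: is_path_def)

lemma path_mono: "is_path E S ps \<Longrightarrow> S \<subseteq> S' \<Longrightarrow> is_path E S' ps"
  by (auto simp: is_path_def)

lemma path_Cons: "is_path E S P \<Longrightarrow> v \<in> S \<Longrightarrow> v \<notin> set P \<Longrightarrow> E v (hd P) \<Longrightarrow> is_path E S (v # P)"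
  unfolding is_path_def
  by (auto simp: nth_Cons hd_conv_nth split: nat.splits)

lemma path_append: "is_path E S xs \<Longrightarrow> is_path E S ys \<Longrightarrow> set xs \<inter> set ys = {} \<Longrightarrow>
   E (last xs) (hd ys) \<Longrightarrow> is_path E S (xs @ ys)"
  unfolding is_path_def
proof (intro conjI allI impI)
  fix i assume a: "xs \<noteq> [] \<and> distinct xs \<and> set xs \<subseteq> S \<and> (\<forall>i. Suc i < length xs \<longrightarrow> E (xs ! i) (xs ! Suc i))"
    "ys \<noteq> [] \<and> distinct ys \<and> set ys \<subseteq> S \<and> (\<forall>i. Suc i < length ys \<longrightarrow> E (ys ! i) (ys ! Suc i))"
    "E (last xs) (hd ys)" and i: "Suc i < length (xs @ ys)"
  show "E ((xs @ ys) ! i) ((xs @ ys) ! Suc i)"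
  proof (cases "Suc i < length xs")
    case True then show ?thesis using a by (simp add: nth_append)
  next
    case False
    show ?thesis
    proof (cases "Suc i = length xs")
      case True then have "i = length xs - 1" by simp
      then show ?thesis using a True by (simp add: nth_append last_conv_nth hd_conv_nth)
    next
      case False
      then have "i \<ge> length xs" using \<open>\<not> Suc i < length xs\<close> by simp
      then show ?thesis using a i
        by (simp add: nth_append Suc_diff_le)
    qed
  qed
qed auto

lemma path_snoc: "is_path E S P \<Longrightarrow> v \<in> S \<Longrightarrow> v \<notin> set P \<Longrightarrow> E (last P) v \<Longrightarrow> is_path E S (P @ [v])"
  by (rule path_append) (auto simp: is_path_def)

lemma path_take: "is_path E S ps \<Longrightarrow> 0 < j \<Longrightarrow> is_path E S (take j ps)"
  unfolding is_path_def by (auto dest: in_set_takeD)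

lemma path_drop: "is_path E S ps \<Longrightarrow> j < length ps \<Longrightarrow> is_path E S (drop j ps)"
  unfolding is_path_def by (auto dest: in_set_dropD)

lemma path_rev: "is_path E S ps \<Longrightarrow> (\<And>x y. E x y \<Longrightarrow> E y x) \<Longrightarrow> is_path E S (rev ps)"
  unfolding is_path_def
proof (intro conjI allI impI)
  fix i assume a: "ps \<noteq> [] \<and> distinct ps \<and> set ps \<subseteq> S \<and> (\<forall>i. Suc i < length ps \<longrightarrow> E (ps ! i) (ps ! Suc i))"
    and s: "\<And>x y. E x y \<Longrightarrow> E y x" and i: "Suc i < length (rev ps)"
  have "E (ps ! (length ps - Suc (Suc i))) (ps ! Suc (length ps - Suc (Suc i)))"
    using a i by auto
  moreover have "Suc (length ps - Suc (Suc i)) = length ps - Suc i" using i by simp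
  ultimately show "E (rev ps ! i) (rev ps ! Suc i)" using i s by (simp add: rev_nth)
qed auto


locale tr =
  fixes V :: "'a set" and E :: "'a \<Rightarrow> 'a \<Rightarrow> bool" and r :: 'a
  assumes tree: "is_tree V E" and rV: "r \<in> V"
begin

lemma finV: "finite V" using tree by (simp add: is_tree_def)
lemma Esym: "E x y \<Longrightarrow> E y x" using tree by (simp add: is_tree_def)
lemma Eirr: "E x y \<Longrightarrow> x \<noteq> y" using tree by (simp add: is_tree_def)
lemma EV: "E x y \<Longrightarrow> x \<in> V \<and> y \<in> V" using tree by (simp add: is_tree_def)
lemma uniq: "x \<in> V \<Longrightarrow> y \<in> V \<Longrightarrow> \<exists>!ps. is_path E V ps \<and> hd ps = x \<and> last ps = y"
  using tree by (simp add: is_tree_def)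

lemma uniq2: "is_path E V ps \<Longrightarrow> is_path E V qs \<Longrightarrow> hd ps = hd qs \<Longrightarrow> last ps = last qs \<Longrightarrow> ps = qs"
proof -
  assume a: "is_path E V ps" "is_path E V qs" "hd ps = hd qs" "last ps = last qs"
  have "hd ps \<in> V" "last ps \<in> V" using a(1) unfolding is_path_def by auto
  from uniq[OF this] a show ?thesis by metis
qed

definition rp :: "'a \<Rightarrow> 'a list" where
  "rp w = (THE ps. is_path E V ps \<and> hd ps = r \<and> last ps = w)"

lemma rp: "w \<in> V \<Longrightarrow> is_path E V (rp w) \<and> hd (rp w) = r \<and> last (rp w) = w"
  unfolding rp_def by (rule theI') (rule uniq[OF rV])

lemma rp_eq: "is_path E V ps \<Longrightarrow> hd ps = r \<Longrightarrow> rp (last ps) = ps"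
proof -
  assume a: "is_path E V ps" "hd ps = r"
  then have "last ps \<in> V" unfolding is_path_def by auto
  from rp[OF this] have "is_path E V (rp (last ps))" "hd (rp (last ps)) = r" "last (rp (last ps)) = last ps" by auto
  from uniq2[OF this(1) a(1)] this(2,3) a(2) show ?thesis by simp
qed

lemma rp_ne: "w \<in> V \<Longrightarrow> rp w \<noteq> []" using rp unfolding is_path_def by blast
lemma rp_distinct: "w \<in> V \<Longrightarrow> distinct (rp w)" using rp unfolding is_path_def by blast
lemma rp_setV: "w \<in> V \<Longrightarrow> set (rp w) \<subseteq> V" using rp unfolding is_path_def by blast

lemma rp_r: "rp r = [r]"
  using rp_eq[OF path_single[OF rV]] by simp

lemma rp_take: "w \<in> V \<Longrightarrow> i < length (rp w) \<Longrightarrow> rp (rp w ! i) = take (Suc i) (rp w)"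
proof -
  assume w: "w \<in> V" and i: "i < length (rp w)"
  have p: "is_path E V (take (Suc i) (rp w))" using path_take rp[OF w] by blast
  have "hd (take (Suc i) (rp w)) = r" using rp[OF w] rp_ne[OF w] by simp
  moreover have "last (take (Suc i) (rp w)) = rp w ! i" using i by (simp add: take_Suc_conv_app_nth)
  ultimately show ?thesis using rp_eq[OF p] by metis
qed

lemma mem_rp: "w \<in> V \<Longrightarrow> u \<in> set (rp w) \<Longrightarrow> \<exists>i<length (rp w). u = rp w ! i \<and> rp u = take (Suc i) (rp w)"
  using rp_take by (metis in_set_conv_nth)

lemma rp_sub: "w \<in> V \<Longrightarrow> u \<in> set (rp w) \<Longrightarrow> set (rp u) \<subseteq> set (rp w)"
  using mem_rp by (metis set_take_subset)

definition desc :: "'a \<Rightarrow> 'a set" where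
  "desc v = {w \<in> V. v \<in> set (rp w)}"

definition ch :: "'a \<Rightarrow> 'a set" where
  "ch v = {c \<in> V. v \<in> V \<and> rp c = rp v @ [c]}"

lemma desc_V: "desc v \<subseteq> V" by (auto simp: desc_def)
lemma self_desc: "v \<in> V \<Longrightarrow> v \<in> desc v"
proof -
  assume v: "v \<in> V"
  have "v \<in> set (rp v)" using rp[OF v] rp_ne[OF v] by (metis last_in_set)
  then show ?thesis using v unfolding desc_def by auto
qed
lemma desc_r: "desc r = V"
proof -
  have "r \<in> set (rp w)" if "w \<in> V" for w using rp[OF that] rp_ne[OF that] by (metis hd_in_set)
  then show ?thesis unfolding desc_def by auto
qed
lemma finite_desc: "finite (desc v)" using desc_V finV finite_subset by blast

lemma ch_V: "c \<in> ch v \<Longrightarrow> c \<in> V" by (simp add: ch_def)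

lemma ch_vV: "c \<in> ch v \<Longrightarrow> v \<in> V" by (simp add: ch_def)
lemma ch_rp: "c \<in> ch v \<Longrightarrow> rp c = rp v @ [c]" by (simp add: ch_def)

lemma v_in_rp: "v \<in> V \<Longrightarrow> v \<in> set (rp v)"
  using rp rp_ne by (metis last_in_set)

lemma ch_notin_rp: "c \<in> ch v \<Longrightarrow> c \<notin> set (rp v)"
  using rp_distinct[OF ch_V] ch_rp by fastforce

lemma desc_sub: "c \<in> ch v \<Longrightarrow> desc c \<subseteq> desc v"
proof
  fix w assume c: "c \<in> ch v" and w: "w \<in> desc c"
  then have "w \<in> V" "c \<in> set (rp w)" by (auto simp: desc_def)
  then have "set (rp c) \<subseteq> set (rp w)" by (rule rp_sub)
  then show "w \<in> desc v" using v_in_rp[OF ch_vV[OF c]] ch_rp[OF c] \<open>w \<in> V\<close> by (auto simp: desc_def)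
qed

lemma v_notin_desc: "c \<in> ch v \<Longrightarrow> v \<notin> desc c"
  using ch_notin_rp by (auto simp: desc_def)

lemma desc_disj: "c1 \<in> ch v \<Longrightarrow> c2 \<in> ch v \<Longrightarrow> c1 \<noteq> c2 \<Longrightarrow> desc c1 \<inter> desc c2 = {}"
proof (rule ccontr)
  assume c: "c1 \<in> ch v" "c2 \<in> ch v" "c1 \<noteq> c2" and "desc c1 \<inter> desc c2 \<noteq> {}"
  then obtain w where w: "w \<in> V" "c1 \<in> set (rp w)" "c2 \<in> set (rp w)" by (auto simp: desc_def)
  obtain i1 where i1: "i1 < length (rp w)" "c1 = rp w ! i1" "rp c1 = take (Suc i1) (rp w)"
    using mem_rp[OF w(1,2)] by blast
  obtain i2 where i2: "i2 < length (rp w)" "c2 = rp w ! i2" "rp c2 = take (Suc i2) (rp w)"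
    using mem_rp[OF w(1,3)] by blast
  have "length (rp c1) = length (rp c2)" using ch_rp c by simp
  then have "i1 = i2" using i1 i2 by simp
  then show False using i1 i2 c by simp
qed

lemma E_ch: "c \<in> ch v \<Longrightarrow> E v c"
proof -
  assume c: "c \<in> ch v"
  have p: "is_path E V (rp c)" using rp[OF ch_V[OF c]] by blast
  let ?n = "length (rp v)"
  have "Suc (?n - 1) < length (rp c)" "Suc (?n - 1) = ?n" using ch_rp[OF c] rp_ne[OF ch_vV[OF c]] by auto
  then have "E (rp c ! (?n - 1)) (rp c ! ?n)" using p unfolding is_path_def by metis
  moreover have "rp c ! (?n - 1) = v"
    using ch_rp[OF c] rp_ne[OF ch_vV[OF c]] rp[OF ch_vV[OF c]] by (simp add: nth_append last_conv_nth)
  moreover have "rp c ! ?n = c" using ch_rp[OF c] by simp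
  ultimately show ?thesis by simp
qed

lemma ch_nbr: "ch v \<subseteq> {w \<in> V. E v w}"
  using E_ch ch_V by blast

lemma finite_ch: "finite (ch v)"
  using ch_nbr finV by (metis (no_types, lifting) finite_subset mem_Collect_eq subsetI ch_V)

lemma ch_not_r: "c \<in> ch v \<Longrightarrow> c \<noteq> r"
  using ch_rp rp_r rp_ne[OF ch_vV] by fastforce

lemma card_desc_less: "c \<in> ch v \<Longrightarrow> card (desc c) < card (desc v)"
  using desc_sub v_notin_desc self_desc[OF ch_vV] finite_desc
  by (metis psubsetI psubset_card_mono)

lemma desc_split: "v \<in> V \<Longrightarrow> desc v = insert v (\<Union>c\<in>ch v. desc c)"
proof
  assume v: "v \<in> V"
  show "insert v (\<Union>c\<in>ch v. desc c) \<subseteq> desc v" using self_desc[OF v] desc_sub by blast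
  show "desc v \<subseteq> insert v (\<Union>c\<in>ch v. desc c)"
  proof
    fix w assume w: "w \<in> desc v"
    show "w \<in> insert v (\<Union>c\<in>ch v. desc c)"
    proof (cases "w = v")
      case False
      have wV: "w \<in> V" and vw: "v \<in> set (rp w)" using w by (auto simp: desc_def)
      obtain i where i: "i < length (rp w)" "v = rp w ! i" "rp v = take (Suc i) (rp w)"
        using mem_rp[OF wV vw] by blast
      have "i \<noteq> length (rp w) - 1" using False i rp[OF wV] rp_ne[OF wV] by (metis last_conv_nth)
      then have si: "Suc i < length (rp w)" using i by simp
      define c where "c = rp w ! Suc i"
      have cin: "c \<in> set (rp w)" using si c_def by simp
      then have cV: "c \<in> V" using rp_setV[OF wV] by blast
      have "rp c = take (Suc (Suc i)) (rp w)" using rp_take[OF wV si] c_def by simp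
      also have "\<dots> = rp v @ [c]" using si i c_def by (simp add: take_Suc_conv_app_nth)
      finally have "c \<in> ch v" using cV v by (simp add: ch_def)
      moreover have "w \<in> desc c" using wV cin by (simp add: desc_def)
      ultimately show ?thesis by blast
    qed simp
  qed
qed

lemma path_snoc_E: "is_path E S (xs @ [y]) \<Longrightarrow> xs \<noteq> [] \<Longrightarrow> E (last xs) y"
proof -
  assume p: "is_path E S (xs @ [y])" and ne: "xs \<noteq> []"
  have "Suc (length xs - 1) < length (xs @ [y])" "Suc (length xs - 1) = length xs" using ne by auto
  then have "E ((xs @ [y]) ! (length xs - 1)) ((xs @ [y]) ! length xs)" using p unfolding is_path_def by metis
  then show ?thesis using ne by (simp add: nth_append last_conv_nth)
qed

lemma parent: "w \<in> V \<Longrightarrow> w \<noteq> r \<Longrightarrow> \<exists>p. p \<in> V \<and> rp w = rp p @ [w] \<and> E w p"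
proof -
  assume w: "w \<in> V" "w \<noteq> r"
  have len: "length (rp w) \<ge> 2"
  proof (rule ccontr)
    assume "\<not> ?thesis"
    then obtain x where "rp w = [x]" using rp_ne[OF w(1)] by (cases "rp w") (auto simp: Suc_le_eq)
    then show False using rp[OF w(1)] w(2) by auto
  qed
  define q where "q = butlast (rp w)"
  have q: "rp w = q @ [w]" using rp[OF w(1)] rp_ne[OF w(1)] q_def by (metis append_butlast_last_id)
  have qne: "q \<noteq> []" using len q by (cases q) auto
  have pq: "is_path E V q" using path_take[OF conjunct1[OF rp[OF w(1)]], of "length (rp w) - 1"] len q_def
    by (simp add: butlast_conv_take)
  have "hd q = r" using rp[OF w(1)] q qne by simp
  then have rq: "rp (last q) = q" using rp_eq[OF pq] by simp
  have "last q \<in> V" using pq qne unfolding is_path_def by auto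
  moreover have "E (last q) w" using path_snoc_E[of V q w] rp[OF w(1)] q qne by simp
  ultimately show ?thesis using q rq Esym by metis
qed

lemma nbr_cases: "w \<in> V \<Longrightarrow> E w u \<Longrightarrow> u \<in> ch w \<or> (w \<noteq> r \<and> rp w = rp u @ [w])"
proof -
  assume w: "w \<in> V" and e: "E w u"
  have uV: "u \<in> V" using EV e by blast
  show ?thesis
  proof (cases "u \<in> set (rp w)")
    case True
    obtain i where i: "i < length (rp w)" "u = rp w ! i" "rp u = take (Suc i) (rp w)"
      using mem_rp[OF w True] by blast
    let ?n = "length (rp w)"
    have "u \<noteq> w" using Eirr e by blast
    then have "i \<noteq> ?n - 1" using i rp[OF w] rp_ne[OF w] by (metis last_conv_nth)
    then have si: "Suc i < ?n" using i by simp
    show ?thesis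
    proof (cases "Suc i = ?n - 1")
      case True
      have "rp w = take (Suc (Suc i)) (rp w)" using True si by simp
      also have "\<dots> = take (Suc i) (rp w) @ [rp w ! Suc i]" by (rule take_Suc_conv_app_nth) (use si in simp)
      finally have "rp w = take (Suc i) (rp w) @ [rp w ! Suc i]" .
      moreover have "rp w ! Suc i = w" using True rp[OF w] rp_ne[OF w] by (simp add: last_conv_nth)
      ultimately have eq: "rp w = rp u @ [w]" using i by simp
      moreover have "w \<noteq> r" using eq rp_r rp_ne[OF uV] by (cases "rp u") auto
      ultimately show ?thesis by blast
    next
      case False
      then have ssi: "Suc (Suc i) < ?n" using si by simp
      have p1: "is_path E V (drop i (rp w))" using path_drop rp[OF w] i by blast
      have h1: "hd (drop i (rp w)) = u" using i by (simp add: hd_drop_conv_nth)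
      have l1: "last (drop i (rp w)) = w" using i rp[OF w] by simp
      have p2: "is_path E V [u, w]" using uV w e Esym \<open>u \<noteq> w\<close> by (auto simp: is_path_def nth_Cons split: nat.splits)
      have "drop i (rp w) = [u, w]" using uniq2[OF p1 p2] h1 l1 by simp
      then have "length (drop i (rp w)) = 2" by simp
      then show ?thesis using ssi by simp
    qed
  next
    case False
    have "is_path E V (rp w @ [u])" using path_snoc rp[OF w] uV False e by metis
    then have "rp u = rp w @ [u]" using rp_eq[of "rp w @ [u]"] rp[OF w] rp_ne[OF w] by simp
    then show ?thesis using uV w by (simp add: ch_def)
  qed
qed

lemma nbrs: "w \<in> V \<Longrightarrow> w \<noteq> r \<Longrightarrow> rp w = rp p @ [w] \<Longrightarrow> p \<in> V \<Longrightarrow> {u \<in> V. E w u} = insert p (ch w) \<and> p \<notin> ch w"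
proof -
  assume w: "w \<in> V" "w \<noteq> r" and p: "rp w = rp p @ [w]" "p \<in> V"
  have pw: "E w p" using path_snoc_E[of V "rp p" w] rp[OF w(1)] p rp_ne[OF p(2)] rp[OF p(2)] Esym by simp
  have pin: "p \<in> set (rp w)" using p v_in_rp[OF p(2)] by simp
  have up: "u = p" if "w \<noteq> r \<and> rp w = rp u @ [w]" "u \<in> V" for u
  proof -
    have "rp u = rp p" using that(1) p(1) by simp
    then show ?thesis using rp[OF that(2)] rp[OF p(2)] by metis
  qed
  have "{u \<in> V. E w u} \<subseteq> insert p (ch w)"
  proof
    fix u assume "u \<in> {u \<in> V. E w u}"
    then have "u \<in> V" "E w u" by auto
    then show "u \<in> insert p (ch w)" using nbr_cases[OF w(1)] up by blast
  qed
  moreover have "insert p (ch w) \<subseteq> {u \<in> V. E w u}" using pw p(2) ch_nbr by blast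
  moreover have "p \<notin> ch w" using pin ch_notin_rp by blast
  ultimately show ?thesis by blast
qed

abbreviation "L \<equiv> leaves V E r"

lemma leaf_nochild: "w \<in> V \<Longrightarrow> w \<noteq> r \<Longrightarrow> ch w = {} \<Longrightarrow> w \<in> L"
proof -
  assume w: "w \<in> V" "w \<noteq> r" "ch w = {}"
  obtain p where p: "p \<in> V" "rp w = rp p @ [w]" using parent[OF w(1,2)] by blast
  from nbrs[OF w(1,2) p(2,1)] w(3) have "{u \<in> V. E w u} = {p}" by simp
  then show ?thesis using w unfolding leaves_def degree_def by simp
qed

lemma notleaf: "ch v \<noteq> {} \<Longrightarrow> v \<notin> L"
proof
  assume ne: "ch v \<noteq> {}" and vL: "v \<in> L"
  then have v: "v \<in> V" "v \<noteq> r" "card {u \<in> V. E v u} = 1" by (auto simp: leaves_def degree_def)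
  obtain p where p: "p \<in> V" "rp v = rp p @ [v]" using parent[OF v(1,2)] by blast
  from nbrs[OF v(1,2) p(2,1)] have "{u \<in> V. E v u} = insert p (ch v)" "p \<notin> ch v" by auto
  then have "card {u \<in> V. E v u} = Suc (card (ch v))" using finite_ch by simp
  moreover have "card (ch v) > 0" using ne finite_ch by (simp add: card_gt_0_iff)
  ultimately show False using v(3) by simp
qed

lemma leaf_below: "w \<in> V \<Longrightarrow> w \<noteq> r \<Longrightarrow> \<exists>l\<in>L. l \<in> desc w"
proof (induction "card (desc w)" arbitrary: w rule: less_induct)
  case less
  show ?case
  proof (cases "ch w = {}")
    case True
    then show ?thesis using leaf_nochild less.prems self_desc by blast
  next
    case False
    then obtain c where c: "c \<in> ch w" by blast
    from less.hyps[OF card_desc_less[OF c] ch_V[OF c] ch_not_r[OF c]] desc_sub[OF c] show ?thesis by blast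
  qed
qed

lemma up_path: "w \<in> desc v \<Longrightarrow> \<exists>ps. is_path E V ps \<and> hd ps = w \<and> last ps = v \<and> set ps \<subseteq> desc v"
proof -
  assume "w \<in> desc v"
  then have w: "w \<in> V" "v \<in> set (rp w)" by (auto simp: desc_def)
  obtain j where j: "j < length (rp w)" "v = rp w ! j" using w(2) by (metis in_set_conv_nth)
  define ps where "ps = rev (drop j (rp w))"
  have "is_path E V (drop j (rp w))" using path_drop rp[OF w(1)] j by blast
  then have "is_path E V ps" unfolding ps_def using path_rev Esym by blast
  moreover have "hd ps = w" unfolding ps_def using j rp[OF w(1)] by (simp add: hd_rev)
  moreover have "last ps = v" unfolding ps_def using j by (simp add: last_rev hd_drop_conv_nth)
  moreover have "set ps \<subseteq> desc v"
  proof
    fix u assume "u \<in> set ps"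
    then have "u \<in> set (drop j (rp w))" unfolding ps_def by simp
    then obtain i where i: "i < length (rp w) - j" "u = drop j (rp w) ! i"
      by (auto simp: in_set_conv_nth)
    then have u: "u = rp w ! (j + i)" "j + i < length (rp w)" using j by auto
    then have "rp u = take (Suc (j + i)) (rp w)" using rp_take[OF w(1)] by simp
    moreover have "take (Suc (j + i)) (rp w) ! j = v" using j by simp
    moreover have "j < length (take (Suc (j + i)) (rp w))" using u by simp
    ultimately have "v \<in> set (rp u)" by (metis nth_mem)
    moreover have "u \<in> V" using u rp_setV[OF w(1)] nth_mem by blast
    ultimately show "u \<in> desc v" by (simp add: desc_def)
  qed
  ultimately show ?thesis by blast
qed

lemma tooth: "c \<in> ch v \<Longrightarrow> l \<in> desc c \<Longrightarrow> \<exists>ps. is_path E V ps \<and> hd ps = l \<and> last ps = v \<and> 2 \<le> length ps \<and> set ps \<subseteq> insert v (desc c)"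
proof -
  assume c: "c \<in> ch v" and l: "l \<in> desc c"
  obtain ps where ps: "is_path E V ps" "hd ps = l" "last ps = c" "set ps \<subseteq> desc c" using up_path[OF l] by blast
  have ne: "ps \<noteq> []" using ps(1) by (simp add: is_path_def)
  have "v \<notin> set ps" using ps(4) v_notin_desc[OF c] by blast
  moreover have "E (last ps) v" using ps(3) E_ch[OF c] Esym by simp
  ultimately have "is_path E V (ps @ [v])" using path_snoc[OF ps(1) ch_vV[OF c]] by blast
  moreover have "2 \<le> length (ps @ [v])" using ne by (cases ps) auto
  ultimately show ?thesis using ps ne by (intro exI[of _ "ps @ [v]"]) auto
qed

lemma conn_single: "connected_set E {v}"
  unfolding connected_set_def by (auto intro!: exI[of _ "[v]"] simp: is_path_def)

lemma conn_insert: "connected_set E S \<Longrightarrow> c \<in> S \<Longrightarrow> E v c \<Longrightarrow> v \<notin> S \<Longrightarrow> connected_set E (insert v S)"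
  unfolding connected_set_def
proof (intro ballI)
  fix x y assume cs: "\<forall>x\<in>S. \<forall>y\<in>S. \<exists>ps. is_path E S ps \<and> hd ps = x \<and> last ps = y"
    and c: "c \<in> S" "E v c" "v \<notin> S" and x: "x \<in> insert v S" and y: "y \<in> insert v S"
  have up: "\<exists>ps. is_path E (insert v S) ps \<and> hd ps = v \<and> last ps = z" if z: "z \<in> S" for z
  proof -
    obtain ps where ps: "is_path E S ps" "hd ps = c" "last ps = z" using cs c z by blast
    have "set ps \<subseteq> S" using ps(1) by (simp add: is_path_def)
    then have "is_path E (insert v S) (v # ps)"
      using path_Cons[OF path_mono[OF ps(1)], of "insert v S" v] c ps(2) by blast
    moreover have "ps \<noteq> []" using ps(1) by (simp add: is_path_def)
    ultimately show ?thesis using ps by (intro exI[of _ "v # ps"]) auto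
  qed
  show "\<exists>ps. is_path E (insert v S) ps \<and> hd ps = x \<and> last ps = y"
  proof (cases "x = v")
    case xv: True
    show ?thesis
    proof (cases "y = v")
      case True then show ?thesis using xv by (auto intro!: exI[of _ "[v]"] simp: is_path_def)
    next
      case False then show ?thesis using up y xv by blast
    qed
  next
    case xv: False
    then have xS: "x \<in> S" using x by blast
    show ?thesis
    proof (cases "y = v")
      case True
      obtain ps where ps: "is_path E (insert v S) ps" "hd ps = v" "last ps = x" using up xS by blast
      have "is_path E (insert v S) (rev ps)" using path_rev[OF ps(1)] Esym by blast
      moreover have "ps \<noteq> []" using ps(1) by (simp add: is_path_def)
      ultimately show ?thesis using ps True by (auto simp: hd_rev last_rev)
    next
      case False
      then have "y \<in> S" using y by blast
      then obtain ps where "is_path E S ps" "hd ps = x" "last ps = y" using cs xS by blast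
      then show ?thesis using path_mono[of E S ps "insert v S"] by blast
    qed
  qed
qed

lemma cbt_mono: "cbt_rooted_minor S E v d \<Longrightarrow> d' \<le> d \<Longrightarrow> cbt_rooted_minor S E v d'"
proof -
  assume a: "cbt_rooted_minor S E v d" "d' \<le> d"
  then obtain X :: "bool list \<Rightarrow> _" where X: "\<forall>xs. length xs \<le> d \<longrightarrow> X xs \<noteq> {} \<and> X xs \<subseteq> S \<and> connected_set E (X xs)"
    "\<forall>xs ys. length xs \<le> d \<longrightarrow> length ys \<le> d \<longrightarrow> xs \<noteq> ys \<longrightarrow> X xs \<inter> X ys = {}"
    "v \<in> X []" "\<forall>xs c. length xs < d \<longrightarrow> (\<exists>u\<in>X xs. Bex (X (xs @ [c])) (E u))"
    unfolding cbt_rooted_minor_def by blast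
  show ?thesis unfolding cbt_rooted_minor_def
  proof (intro exI[of _ X] conjI allI impI)
    fix xs :: "bool list" assume "length xs \<le> d'"
    then have "length xs \<le> d" using a(2) by simp
    then show "X xs \<noteq> {}" "X xs \<subseteq> S" "connected_set E (X xs)" using X(1) by auto
  next
    fix xs ys :: "bool list" assume "length xs \<le> d'" "length ys \<le> d'" "xs \<noteq> ys"
    then show "X xs \<inter> X ys = {}" using X(2) a(2) by simp
  next
    show "v \<in> X []" by (rule X(3))
  next
    fix xs :: "bool list" and b assume "length xs < d'"
    then show "\<exists>u\<in>X xs. \<exists>w\<in>X (xs @ [b]). E u w" using X(4) a(2) by simp
  qed
qed

lemma cbt_zero: "v \<in> S \<Longrightarrow> cbt_rooted_minor S E v 0"
  unfolding cbt_rooted_minor_def using conn_single by (intro exI[of _ "\<lambda>_. {v}"]) simp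

lemma cbt_lift: "c \<in> ch v \<Longrightarrow> cbt_rooted_minor (desc c) E c d \<Longrightarrow> cbt_rooted_minor (desc v) E v d"
proof -
  assume c: "c \<in> ch v" and "cbt_rooted_minor (desc c) E c d"
  then obtain X :: "bool list \<Rightarrow> 'a set" where X: "\<forall>xs. length xs \<le> d \<longrightarrow> X xs \<noteq> {} \<and> X xs \<subseteq> desc c \<and> connected_set E (X xs)"
    "\<forall>xs ys. length xs \<le> d \<longrightarrow> length ys \<le> d \<longrightarrow> xs \<noteq> ys \<longrightarrow> X xs \<inter> X ys = {}"
    "c \<in> X []" "\<forall>xs b. length xs < d \<longrightarrow> (\<exists>u\<in>X xs. \<exists>w\<in>X (xs @ [b]). E u w)"
    unfolding cbt_rooted_minor_def by blast
  define Y where "Y = X([] := insert v (X []))"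
  have vn: "v \<notin> X xs" if "length xs \<le> d" for xs using X(1) that v_notin_desc[OF c] by blast
  have sub: "desc c \<subseteq> desc v" "v \<in> desc v" using desc_sub[OF c] self_desc[OF ch_vV[OF c]] by auto
  have "\<forall>xs. length xs \<le> d \<longrightarrow> Y xs \<noteq> {} \<and> Y xs \<subseteq> desc v \<and> connected_set E (Y xs)"
  proof (intro allI impI)
    fix xs :: "bool list" assume l: "length xs \<le> d"
    show "Y xs \<noteq> {} \<and> Y xs \<subseteq> desc v \<and> connected_set E (Y xs)"
    proof (cases "xs = []")
      case True
      have "connected_set E (insert v (X []))"
        using conn_insert[of "X []" c v] X(1) X(3) E_ch[OF c] vn by auto
      moreover have "X [] \<subseteq> desc c" using X(1) by simp
      ultimately show ?thesis using True sub Y_def by auto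
    next
      case False then show ?thesis using X(1) l sub Y_def by auto
    qed
  qed
  moreover have "\<forall>xs ys. length xs \<le> d \<longrightarrow> length ys \<le> d \<longrightarrow> xs \<noteq> ys \<longrightarrow> Y xs \<inter> Y ys = {}"
    using X(2) vn unfolding Y_def by auto
  moreover have "v \<in> Y []" unfolding Y_def by simp
  moreover have "\<forall>xs b. length xs < d \<longrightarrow> (\<exists>u\<in>Y xs. \<exists>w\<in>Y (xs @ [b]). E u w)"
    using X(4) unfolding Y_def by (metis fun_upd_apply insertCI snoc_eq_iff_butlast)
  ultimately show ?thesis unfolding cbt_rooted_minor_def by blast
qed

lemma cbt_two: "c1 \<in> ch v \<Longrightarrow> c2 \<in> ch v \<Longrightarrow> c1 \<noteq> c2 \<Longrightarrow> cbt_rooted_minor (desc c1) E c1 d \<Longrightarrow>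
   cbt_rooted_minor (desc c2) E c2 d \<Longrightarrow> cbt_rooted_minor (desc v) E v (Suc d)"
proof -
  assume c: "c1 \<in> ch v" "c2 \<in> ch v" "c1 \<noteq> c2" and m1: "cbt_rooted_minor (desc c1) E c1 d"
    and m2: "cbt_rooted_minor (desc c2) E c2 d"
  from m1 obtain X1 :: "bool list \<Rightarrow> 'a set" where X1: "\<forall>xs. length xs \<le> d \<longrightarrow> X1 xs \<noteq> {} \<and> X1 xs \<subseteq> desc c1 \<and> connected_set E (X1 xs)"
    "\<forall>xs ys. length xs \<le> d \<longrightarrow> length ys \<le> d \<longrightarrow> xs \<noteq> ys \<longrightarrow> X1 xs \<inter> X1 ys = {}"
    "c1 \<in> X1 []" "\<forall>xs b. length xs < d \<longrightarrow> (\<exists>u\<in>X1 xs. \<exists>w\<in>X1 (xs @ [b]). E u w)"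
    unfolding cbt_rooted_minor_def by blast
  from m2 obtain X2 :: "bool list \<Rightarrow> 'a set" where X2: "\<forall>xs. length xs \<le> d \<longrightarrow> X2 xs \<noteq> {} \<and> X2 xs \<subseteq> desc c2 \<and> connected_set E (X2 xs)"
    "\<forall>xs ys. length xs \<le> d \<longrightarrow> length ys \<le> d \<longrightarrow> xs \<noteq> ys \<longrightarrow> X2 xs \<inter> X2 ys = {}"
    "c2 \<in> X2 []" "\<forall>xs b. length xs < d \<longrightarrow> (\<exists>u\<in>X2 xs. \<exists>w\<in>X2 (xs @ [b]). E u w)"
    unfolding cbt_rooted_minor_def by blast
  define Y where "Y = (\<lambda>xs. case xs of [] \<Rightarrow> {v} | a # ys \<Rightarrow> if a then X1 ys else X2 ys)"
  have Y0: "Y [] = {v}" by (simp add: Y_def)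
  have Y1: "Y (True # ys) = X1 ys" for ys by (simp add: Y_def)
  have Y2: "Y (False # ys) = X2 ys" for ys by (simp add: Y_def)
  have vV: "v \<in> V" using ch_vV[OF c(1)] .
  have dj: "desc c1 \<inter> desc c2 = {}" using desc_disj c by blast
  have vn1: "v \<notin> desc c1" and vn2: "v \<notin> desc c2" using v_notin_desc c by auto
  have s1: "desc c1 \<subseteq> desc v" and s2: "desc c2 \<subseteq> desc v" using desc_sub c by auto
  have A: "Y xs \<noteq> {} \<and> Y xs \<subseteq> desc v \<and> connected_set E (Y xs)" if l: "length xs \<le> Suc d" for xs
  proof (cases xs)
    case Nil then show ?thesis using Y0 self_desc[OF vV] conn_single by simp
  next
    case (Cons a ys)
    then have l': "length ys \<le> d" using l by simp
    have "X1 ys \<noteq> {} \<and> X1 ys \<subseteq> desc c1 \<and> connected_set E (X1 ys)" using X1(1) l' by blast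
    moreover have "X2 ys \<noteq> {} \<and> X2 ys \<subseteq> desc c2 \<and> connected_set E (X2 ys)" using X2(1) l' by blast
    ultimately show ?thesis using Cons Y1 Y2 s1 s2 by (cases a) auto
  qed
  have sub1: "X1 ys \<subseteq> desc c1" if "length ys \<le> d" for ys using X1(1) that by blast
  have sub2: "X2 ys \<subseteq> desc c2" if "length ys \<le> d" for ys using X2(1) that by blast
  have B: "Y xs \<inter> Y ys = {}" if l: "length xs \<le> Suc d" "length ys \<le> Suc d" and ne: "xs \<noteq> ys" for xs ys
  proof (cases xs)
    case Nil
    then obtain b zs where ys: "ys = b # zs" using ne by (cases ys) auto
    then have "length zs \<le> d" using l by simp
    then have "X1 zs \<subseteq> desc c1" "X2 zs \<subseteq> desc c2" using sub1 sub2 by auto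
    then show ?thesis using Nil ys Y0 Y1 Y2 vn1 vn2 by (cases b) auto
  next
    case (Cons a xs')
    show ?thesis
    proof (cases ys)
      case Nil
      have "length xs' \<le> d" using l Cons by simp
      then have "X1 xs' \<subseteq> desc c1" "X2 xs' \<subseteq> desc c2" using sub1 sub2 by auto
      then show ?thesis using Cons Nil Y0 Y1 Y2 vn1 vn2 by (cases a) auto
    next
      case (Cons b ys')
      have l1: "length xs' \<le> d" "length ys' \<le> d" using l Cons \<open>xs = a # xs'\<close> by auto
      show ?thesis
      proof (cases "a = b")
        case True
        then have "xs' \<noteq> ys'" using ne Cons \<open>xs = a # xs'\<close> by simp
        then have "X1 xs' \<inter> X1 ys' = {}" "X2 xs' \<inter> X2 ys' = {}" using X1(2) X2(2) l1 by blast+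
        then show ?thesis using True Cons \<open>xs = a # xs'\<close> Y1 Y2 by (cases a) auto
      next
        case False
        have "X1 xs' \<inter> X2 ys' = {}" "X2 xs' \<inter> X1 ys' = {}" using sub1 sub2 l1 dj by blast+
        then show ?thesis using False Cons \<open>xs = a # xs'\<close> Y1 Y2 by (cases a; cases b) auto
      qed
    qed
  qed
  have C: "\<exists>u\<in>Y xs. \<exists>w\<in>Y (xs @ [b]). E u w" if l: "length xs < Suc d" for xs b
  proof (cases xs)
    case Nil
    have "E v c1" "E v c2" using E_ch c by auto
    then show ?thesis using Nil Y0 Y1 Y2 X1(3) X2(3) by (cases b) auto
  next
    case (Cons a ys)
    then have l': "length ys < d" using l by simp
    have "\<exists>u\<in>X1 ys. \<exists>w\<in>X1 (ys @ [b]). E u w" using X1(4) l' by blast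
    moreover have "\<exists>u\<in>X2 ys. \<exists>w\<in>X2 (ys @ [b]). E u w" using X2(4) l' by blast
    ultimately show ?thesis using Cons Y1 Y2 by (cases a) auto
  qed
  show ?thesis unfolding cbt_rooted_minor_def
    apply (rule exI[of _ Y])
    using A B C Y0 by blast
qed

lemma cbt_bound: "cbt_rooted_minor V E r d \<Longrightarrow> d \<le> card V"
proof -
  assume "cbt_rooted_minor V E r d"
  then obtain X :: "bool list \<Rightarrow> 'a set" where X: "\<forall>xs. length xs \<le> d \<longrightarrow> X xs \<noteq> {} \<and> X xs \<subseteq> V \<and> connected_set E (X xs)"
    "\<forall>xs ys. length xs \<le> d \<longrightarrow> length ys \<le> d \<longrightarrow> xs \<noteq> ys \<longrightarrow> X xs \<inter> X ys = {}"
    unfolding cbt_rooted_minor_def by blast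
  define g where "g i = (SOME x. x \<in> X (replicate i True))" for i
  have g: "g i \<in> X (replicate i True)" if "i \<le> d" for i
    using X(1) that unfolding g_def by (metis length_replicate some_in_eq)
  have "inj_on g {..d}"
  proof (rule inj_onI)
    fix i j assume "i \<in> {..d}" "j \<in> {..d}" "g i = g j"
    then show "i = j" using g X(2) by (metis IntI atMost_iff empty_iff length_replicate)
  qed
  moreover have "g i \<in> V" if "i \<le> d" for i using g[OF that] X(1) that by (metis length_replicate subsetD)
  then have "g ` {..d} \<subseteq> V" by auto
  ultimately have "card {..d} \<le> card V" using card_inj_on_le finV by blast
  then show ?thesis by simp
qed

definition combv :: "'a \<Rightarrow> nat \<Rightarrow> 'a list \<Rightarrow> (nat \<Rightarrow> 'a list) \<Rightarrow> bool" where
  "combv v k P Q \<longleftrightarrow> is_path E V P \<and> hd P = v \<and> set P \<subseteq> desc v \<and>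
    (\<forall>i<k. is_path E V (Q i) \<and> 2 \<le> length (Q i) \<and> set (Q i) \<inter> set P = {last (Q i)} \<and> hd (Q i) \<in> L \<and> set (Q i) \<subseteq> desc v) \<and>
    (\<forall>i<k. \<forall>j<k. i \<noteq> j \<longrightarrow> set (Q i) \<inter> set (Q j) = {})"

lemma comb_extend: "c \<in> ch v \<Longrightarrow> combv c m P Q \<Longrightarrow> combv v m (v # P) Q"
proof -
  assume c: "c \<in> ch v" and cb: "combv c m P Q"
  have P: "is_path E V P" "hd P = c" "set P \<subseteq> desc c" using cb by (auto simp: combv_def)
  have vn: "v \<notin> desc c" using v_notin_desc[OF c] .
  have vV: "v \<in> V" using ch_vV[OF c] .
  have "is_path E V (v # P)" using path_Cons[OF P(1) vV] P(2,3) vn E_ch[OF c] by blast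
  moreover have "set (v # P) \<subseteq> desc v" using P(3) desc_sub[OF c] self_desc[OF vV] by auto
  moreover have "\<forall>i<m. is_path E V (Q i) \<and> 2 \<le> length (Q i) \<and> set (Q i) \<inter> set (v # P) = {last (Q i)} \<and> hd (Q i) \<in> L \<and> set (Q i) \<subseteq> desc v"
  proof (intro allI impI)
    fix i assume i: "i < m"
    then have q: "is_path E V (Q i)" "2 \<le> length (Q i)" "set (Q i) \<inter> set P = {last (Q i)}" "hd (Q i) \<in> L" "set (Q i) \<subseteq> desc c"
      using cb by (auto simp: combv_def)
    have "v \<notin> set (Q i)" using q(5) vn by blast
    then have "set (Q i) \<inter> set (v # P) = {last (Q i)}" using q(3) by auto
    then show "is_path E V (Q i) \<and> 2 \<le> length (Q i) \<and> set (Q i) \<inter> set (v # P) = {last (Q i)} \<and> hd (Q i) \<in> L \<and> set (Q i) \<subseteq> desc v"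
      using q desc_sub[OF c] by blast
  qed
  ultimately show ?thesis using cb unfolding combv_def by simp
qed

lemma comb_add: "c \<in> ch v \<Longrightarrow> c' \<in> ch v \<Longrightarrow> c \<noteq> c' \<Longrightarrow> combv c m P Q \<Longrightarrow> l \<in> L \<Longrightarrow> l \<in> desc c' \<Longrightarrow>
  \<exists>Q'. combv v (Suc m) (v # P) Q'"
proof -
  assume c: "c \<in> ch v" "c' \<in> ch v" "c \<noteq> c'" and cb: "combv c m P Q" and l: "l \<in> L" "l \<in> desc c'"
  obtain T where T: "is_path E V T" "hd T = l" "last T = v" "2 \<le> length T" "set T \<subseteq> insert v (desc c')"
    using tooth[OF c(2) l(2)] by blast
  have cb': "combv v m (v # P) Q" using comb_extend[OF c(1) cb] .
  have Psub: "set P \<subseteq> desc c" using cb by (simp add: combv_def)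
  have Qsub: "set (Q i) \<subseteq> desc c" if "i < m" for i using cb that by (simp add: combv_def)
  have dj: "desc c \<inter> desc c' = {}" using desc_disj c by blast
  have vn: "v \<notin> desc c" "v \<notin> desc c'" using v_notin_desc c by auto
  have Tne: "T \<noteq> []" using T(4) by auto
  have vT: "v \<in> set T" using T(3) Tne last_in_set by metis
  have TP: "set T \<inter> set (v # P) = {last T}" using T(3,5) Psub dj vT by auto
  have TQ: "set T \<inter> set (Q i) = {}" if "i < m" for i using T(5) Qsub[OF that] dj vn by auto
  have Tsub: "set T \<subseteq> desc v" using T(5) desc_sub[OF c(2)] self_desc[OF ch_vV[OF c(1)]] by auto
  have cbP: "is_path E V (v # P)" "hd (v # P) = v" "set (v # P) \<subseteq> desc v" using cb' unfolding combv_def by blast+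
  have cbQ: "is_path E V (Q i) \<and> 2 \<le> length (Q i) \<and> set (Q i) \<inter> set (v # P) = {last (Q i)} \<and>
          hd (Q i) \<in> L \<and> set (Q i) \<subseteq> desc v" if "i < m" for i using cb' that unfolding combv_def by blast
  have cbD: "set (Q i) \<inter> set (Q j) = {}" if "i < m" "j < m" "i \<noteq> j" for i j
    using cb' that unfolding combv_def by blast
  define Q' where "Q' = Q(m := T)"
  have A: "is_path E V (Q' i) \<and> 2 \<le> length (Q' i) \<and> set (Q' i) \<inter> set (v # P) = {last (Q' i)} \<and>
          hd (Q' i) \<in> L \<and> set (Q' i) \<subseteq> desc v" if i: "i < Suc m" for i
  proof (cases "i = m")
    case True then show ?thesis using T TP Tsub l Q'_def by simp
  next
    case False then have "i < m" using i by simp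
    then show ?thesis using cbQ False Q'_def by simp
  qed
  have B: "set (Q' i) \<inter> set (Q' j) = {}" if ij: "i < Suc m" "j < Suc m" "i \<noteq> j" for i j
  proof (cases "i = m")
    case True then show ?thesis using ij TQ Q'_def by simp
  next
    case False
    show ?thesis
    proof (cases "j = m")
      case True then show ?thesis using ij TQ Q'_def False by (simp add: Int_commute)
    next
      case False
      then have "i < m" "j < m" using ij \<open>i \<noteq> m\<close> by auto
      then show ?thesis using ij cbD \<open>i \<noteq> m\<close> False Q'_def by simp
    qed
  qed
  have "combv v (Suc m) (v # P) Q'"
    unfolding combv_def using cbP A B by blast
  then show ?thesis by blast
qed

lemma comb_one: "c \<in> ch v \<Longrightarrow> l \<in> L \<Longrightarrow> l \<in> desc c \<Longrightarrow> \<exists>Q. combv v 1 [v] Q"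
proof -
  assume c: "c \<in> ch v" and l: "l \<in> L" "l \<in> desc c"
  obtain T where T: "is_path E V T" "hd T = l" "last T = v" "2 \<le> length T" "set T \<subseteq> insert v (desc c)"
    using tooth[OF c l(2)] by blast
  have Tne: "T \<noteq> []" using T(4) by auto
  have vT: "v \<in> set T" using T(3) Tne last_in_set by metis
  have vV: "v \<in> V" using ch_vV[OF c] .
  have Tsub: "set T \<subseteq> desc v" using T(5) desc_sub[OF c] self_desc[OF vV] by auto
  have "combv v 1 [v] (\<lambda>_. T)" unfolding combv_def
    using T vT Tsub l path_single[OF vV] self_desc[OF vV] by auto
  then show ?thesis by blast
qed

end

lemma f_pos: "1 \<le> f D b k"
  by (induction D b k rule: f.induct) auto

lemma f_mono: "f D b k \<le> f D (Suc b) k"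
proof (induction D b k rule: f.induct)
  case (3 D k)
  then show ?case using f_pos[of D 0 "Suc (Suc k)"] f_pos[of D 1 "Suc (Suc k)"] by simp
next
  case (4 D b k)
  then show ?case by (simp add: add_mono mult_le_mono2)
qed auto

lemma exists_big: "finite A \<Longrightarrow> card A * x < sum g A \<Longrightarrow> \<exists>a\<in>A. x < (g a :: nat)"
proof (rule ccontr)
  assume "finite A" "card A * x < sum g A" "\<not> (\<exists>a\<in>A. x < g a)"
  then have "sum g A \<le> sum (\<lambda>_. x) A" by (intro sum_mono) auto
  then show False using \<open>card A * x < sum g A\<close> by simp
qed

context tr
begin

lemma claim:
  assumes deg: "\<forall>w\<in>V. degree V E w \<le> D" and D1: "1 \<le> D"
  shows "v \<in> V \<Longrightarrow> (\<forall>d. cbt_rooted_minor (desc v) E v d \<longrightarrow> d \<le> b) \<Longrightarrow> 1 \<le> k \<Longrightarrow>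
    f D b k < card (L \<inter> desc v) \<Longrightarrow> \<exists>P Q. combv v k P Q"
proof (induction "card (desc v)" arbitrary: v b k rule: less_induct)
  case less
  note vV = less.prems(1) and bnd = less.prems(2) and k1 = less.prems(3) and big = less.prems(4)
  define n where "n c = card (L \<inter> desc c)" for c
  have fp: "1 \<le> f D b k" by (rule f_pos)
  have chne: "ch v \<noteq> {}"
  proof
    assume "ch v = {}"
    then have "desc v = {v}" using desc_split[OF vV] by simp
    then have "card (L \<inter> desc v) \<le> 1" by (simp add: card_le_Suc0_iff_eq)
    then show False using big fp by simp
  qed
  have vL: "v \<notin> L" using notleaf[OF chne] .
  have Ld: "L \<inter> desc v = (\<Union>c\<in>ch v. L \<inter> desc c)" using desc_split[OF vV] vL by auto
  have N: "card (L \<inter> desc v) = (\<Sum>c\<in>ch v. n c)"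
    unfolding Ld n_def
  proof (rule card_UN_disjoint)
    show "finite (ch v)" by (rule finite_ch)
    show "\<forall>i\<in>ch v. finite (L \<inter> desc i)" using finite_desc by blast
    show "\<forall>i\<in>ch v. \<forall>j\<in>ch v. i \<noteq> j \<longrightarrow> L \<inter> desc i \<inter> (L \<inter> desc j) = {}"
      using desc_disj by blast
  qed
  have bndc: "\<forall>d. cbt_rooted_minor (desc c) E c d \<longrightarrow> d \<le> b" if "c \<in> ch v" for c
    using cbt_lift[OF that] bnd by blast
  have cardch: "card (ch v) \<le> D"
  proof -
    have "card (ch v) \<le> card {w \<in> V. E v w}" using ch_nbr finV by (intro card_mono) auto
    also have "\<dots> \<le> D" using deg vV unfolding degree_def by blast
    finally show ?thesis .
  qed
  have IH: "\<exists>P Q. combv c k' P Q" if "c \<in> ch v" "\<forall>d. cbt_rooted_minor (desc c) E c d \<longrightarrow> d \<le> b'"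
    "1 \<le> k'" "f D b' k' < n c" for c b' k'
  proof -
    have "f D b' k' < card (L \<inter> desc c)" using that(4) n_def by simp
    then show ?thesis using less.hyps[OF card_desc_less[OF that(1)] ch_V[OF that(1)] that(2,3)] by blast
  qed
  show ?case
  proof (cases "k = 1")
    case True
    have "L \<inter> desc v \<noteq> {}" using big by auto
    then obtain l where l: "l \<in> L" "l \<in> desc v" by blast
    then have "l \<noteq> v" using vL by blast
    then obtain c where c: "c \<in> ch v" "l \<in> desc c" using l desc_split[OF vV] by blast
    from comb_one[OF c(1) l(1) c(2)] True show ?thesis by blast
  next
    case False
    then obtain k' where kk: "k = Suc (Suc k')" using k1 by (metis One_nat_def Suc_le_D not0_implies_Suc not_less_eq_eq le_zero_eq)
    show ?thesis
    proof (cases "\<exists>c. ch v = {c}")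
      case True
      then obtain c where c: "ch v = {c}" by blast
      then have "c \<in> ch v" by simp
      have "f D b k < n c" using big N c by simp
      from IH[OF \<open>c \<in> ch v\<close> bndc[OF \<open>c \<in> ch v\<close>] k1 this] obtain P Q where "combv c k P Q" by blast
      from comb_extend[OF \<open>c \<in> ch v\<close> this] show ?thesis by blast
    next
      case False
      obtain c1 where c1: "c1 \<in> ch v" using chne by blast
      obtain c2 where c2: "c2 \<in> ch v" "c2 \<noteq> c1" using False c1 chne by blast
      have b0: "b \<noteq> 0"
      proof
        assume "b = 0"
        have "cbt_rooted_minor (desc c1) E c1 0" "cbt_rooted_minor (desc c2) E c2 0"
          using cbt_zero self_desc ch_V c1 c2 by blast+
        from cbt_two[OF c2(1) c1 c2(2) this(2) this(1)] bnd \<open>b = 0\<close> show False by fastforce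
      qed
      then obtain b' where bb: "b = Suc b'" using not0_implies_Suc by blast
      have fk: "f D b k = f D b (Suc k') + (D - 1) * f D b' (Suc k')" using kk bb by simp
      have fm: "f D b' (Suc k') \<le> f D b (Suc k')" using f_mono bb by simp
      have nonheavy: "\<forall>d. cbt_rooted_minor (desc c) E c d \<longrightarrow> d \<le> b'"
        if "c \<in> ch v" "\<not> cbt_rooted_minor (desc c) E c b" for c
      proof (intro allI impI)
        fix d assume "cbt_rooted_minor (desc c) E c d"
        then show "d \<le> b'" using cbt_mono[of "desc c" c d b] that(2) bb by (cases "b \<le> d") auto
      qed
      have key: "\<exists>c c' b0. c \<in> ch v \<and> c' \<in> ch v \<and> c \<noteq> c' \<and> (\<forall>d. cbt_rooted_minor (desc c) E c d \<longrightarrow> d \<le> b0)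
          \<and> f D b0 (Suc k') < n c"
      proof (cases "\<exists>h\<in>ch v. cbt_rooted_minor (desc h) E h b")
        case True
        then obtain h where h: "h \<in> ch v" "cbt_rooted_minor (desc h) E h b" by blast
        have uniq: "\<not> cbt_rooted_minor (desc c) E c b" if "c \<in> ch v" "c \<noteq> h" for c
        proof
          assume "cbt_rooted_minor (desc c) E c b"
          from cbt_two[OF that(1) h(1) that(2) this h(2)] bnd show False by fastforce
        qed
        obtain c' where c': "c' \<in> ch v" "c' \<noteq> h" using c1 c2 by metis
        show ?thesis
        proof (cases "f D b (Suc k') < n h")
          case True
          then show ?thesis using h(1) c' bndc[OF h(1)] by blast
        next
          case False
          have fin: "finite (ch v)" by (rule finite_ch)
          have "sum n (ch v) = n h + sum n (ch v - {h})" using sum.remove[OF fin h(1)] by simp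
          then have "(D - 1) * f D b' (Suc k') < sum n (ch v - {h})" using big N fk False by simp
          moreover have "card (ch v - {h}) \<le> D - 1" using cardch h(1) fin by simp
          ultimately have "card (ch v - {h}) * f D b' (Suc k') < sum n (ch v - {h})"
            by (meson le_less_trans mult_le_mono1)
          then obtain c where c: "c \<in> ch v - {h}" "f D b' (Suc k') < n c"
            using exists_big[of "ch v - {h}"] fin by blast
          then have "\<forall>d. cbt_rooted_minor (desc c) E c d \<longrightarrow> d \<le> b'" using nonheavy uniq by blast
          then show ?thesis using c h(1) by blast
        qed
      next
        case False
        have "card (ch v) * f D b' (Suc k') \<le> D * f D b' (Suc k')" using cardch by simp
        also have "\<dots> = f D b' (Suc k') + (D - 1) * f D b' (Suc k')"
          using D1 by (cases D) auto
        also have "\<dots> \<le> f D b k" using fk fm by simp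
        finally have "card (ch v) * f D b' (Suc k') < sum n (ch v)" using big N by simp
        then obtain c where c: "c \<in> ch v" "f D b' (Suc k') < n c"
          using exists_big[of "ch v"] finite_ch by blast
        obtain c' where c': "c' \<in> ch v" "c' \<noteq> c" using c1 c2 by metis
        show ?thesis using c c' nonheavy False by blast
      qed
      then obtain c c' b0 where cc: "c \<in> ch v" "c' \<in> ch v" "c \<noteq> c'"
        "\<forall>d. cbt_rooted_minor (desc c) E c d \<longrightarrow> d \<le> b0" "f D b0 (Suc k') < n c" by blast
      from IH[OF cc(1) cc(4) _ cc(5)] obtain P Q where PQ: "combv c (Suc k') P Q" by auto
      obtain l where l: "l \<in> L" "l \<in> desc c'" using leaf_below[OF ch_V[OF cc(2)] ch_not_r[OF cc(2)]] by blast
      from comb_add[OF cc(1-3) PQ l] kk show ?thesis by blast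
    qed
  qed
qed

end

theorem corollary16:
  fixes V :: "'a set" and E :: "'a \<Rightarrow> 'a \<Rightarrow> bool" and r :: 'a
    and D b k :: nat
  assumes "D \<ge> 1" and "k \<ge> 1"
    and "rooted_tree V E r"
    and "\<forall>v\<in>V. degree V E v \<le> D"
    and "bT V E r \<le> b"
    and "card (leaves V E r) > f D b k"
  shows "has_comb_with_teeth_in V E k (leaves V E r)"
proof -
  interpret tr V E r using assms(3) unfolding rooted_tree_def by unfold_locales auto
  have bnd: "\<forall>d. cbt_rooted_minor (desc r) E r d \<longrightarrow> d \<le> b"
  proof (intro allI impI)
    fix d assume "cbt_rooted_minor (desc r) E r d"
    then have m: "cbt_rooted_minor V E r d" using desc_r by simp
    have "d \<le> bT V E r" unfolding bT_def
      by (rule Greatest_le_nat[of _ d "card V"]) (use m cbt_bound in auto)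
    then show "d \<le> b" using assms(5) by simp
  qed
  have "leaves V E r \<inter> desc r = leaves V E r" using desc_r by (auto simp: leaves_def)
  then have big: "f D b k < card (leaves V E r \<inter> desc r)" using assms(6) by simp
  obtain P Q where PQ: "combv r k P Q"
    using claim[OF assms(4) assms(1) rV bnd assms(2) big] by blast
  have P: "is_path E V P" using PQ unfolding combv_def by blast
  have Q1: "\<forall>i<k. is_path E V (Q i) \<and> 2 \<le> length (Q i) \<and> set (Q i) \<inter> set P = {last (Q i)} \<and> hd (Q i) \<in> leaves V E r"
    using PQ unfolding combv_def by blast
  have Q2: "\<forall>i<k. \<forall>j<k. i \<noteq> j \<longrightarrow> set (Q i) \<inter> set (Q j) = {}"
    using PQ unfolding combv_def by blast
  show ?thesis unfolding has_comb_with_teeth_in_def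
    by (intro exI[of _ P] exI[of _ Q] conjI P Q1 Q2)
qed

end
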